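(* There is an absolute constant $c>0$ such that the following holds. Let $(V,E^+\uplus E^-)$ be a Correlation Clustering instance with optimum cost $\mathrm{opt}$, let $\mathcal C$ be a clustering of $V$ with $\mathrm{obj}(\mathcal C)\le3\,\mathrm{opt}$, and let $\mathcal K$ be the partition of $V$ constructed from $\mathcal C$ as described in the context (with $\beta=0.1$). Then $\mathrm{obj}(\mathcal K)\le c\cdot\mathrm{opt}$, where $\mathcal K$ is viewed as a clustering.
   Context: A Correlation Clustering instance consists of a finite vertex set $V$ and a partition $E^+\uplus E^-=\binom V2$ of unordered pairs of distinct vertices into $+$edges and $-$edges. For a clustering (partition) $\mathcal C$ of $V$, $\mathrm{obj}(\mathcal C)$ is the number of $+$edges between different parts plus the number of $-$edges inside parts; $\mathrm{opt}$ is its minimum. By convention every vertex has a $+$ self-loop, so the set $N^+_u$ of $+$neighbours of $u$ contains $u$ (self-loops never contribute to cost). $A\triangle B$ denotes symmetric difference. Construction of $\mathcal K$ with $\beta=0.1$: for every non-singleton $C\in\mathcal C$, mark every $u\in C$ with $|N^+_u\triangle C|>\frac\beta2|C|$, and then, if at least $\frac{\beta|C|}{3}$ vertices of $C$ are marked, mark all vertices of $C$. $\mathcal K$ is obtained from $\mathcal C$ by removing every marked vertex from its cluster and making it a singleton cluster. The parts of $\mathcal K$ are called atoms. *)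

theory Defs
  imports Complex_Main
begin

(* A Correlation Clustering instance: finite vertex set V and a symmetric
   relation E on V giving the +edges; every other pair of distinct vertices
   of V is a -edge. *)
definition cc_instance :: "'a set \<Rightarrow> ('a \<Rightarrow> 'a \<Rightarrow> bool) \<Rightarrow> bool" where
  "cc_instance V E \<longleftrightarrow> finite V \<and> (\<forall>u v. E u v \<longrightarrow> E v u)"

definition is_clustering :: "'a set \<Rightarrow> 'a set set \<Rightarrow> bool" where
  "is_clustering V \<C> \<longleftrightarrow> \<Union>\<C> = V \<and> {} \<notin> \<C> \<and>
     (\<forall>A\<in>\<C>. \<forall>B\<in>\<C>. A \<noteq> B \<longrightarrow> A \<inter> B = {})"

definition same_cluster :: "'a set set \<Rightarrow> 'a \<Rightarrow> 'a \<Rightarrow> bool" where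
  "same_cluster \<C> u v \<longleftrightarrow> (\<exists>A\<in>\<C>. u \<in> A \<and> v \<in> A)"

definition obj :: "'a set \<Rightarrow> ('a \<Rightarrow> 'a \<Rightarrow> bool) \<Rightarrow> 'a set set \<Rightarrow> nat" where
  "obj V E \<C> = card {{u, v} | u v. u \<in> V \<and> v \<in> V \<and> u \<noteq> v \<and>
      ((E u v \<and> \<not> same_cluster \<C> u v) \<or> (\<not> E u v \<and> same_cluster \<C> u v))}"

definition opt :: "'a set \<Rightarrow> ('a \<Rightarrow> 'a \<Rightarrow> bool) \<Rightarrow> nat" where
  "opt V E = Min (obj V E ` {\<C>. is_clustering V \<C>})"

definition Nplus :: "'a set \<Rightarrow> ('a \<Rightarrow> 'a \<Rightarrow> bool) \<Rightarrow> 'a \<Rightarrow> 'a set" where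
  "Nplus V E u = {v \<in> V. v = u \<or> E u v}"

definition beta :: real where "beta = 1/10"

definition marked0 :: "'a set \<Rightarrow> ('a \<Rightarrow> 'a \<Rightarrow> bool) \<Rightarrow> 'a set \<Rightarrow> 'a set" where
  "marked0 V E C = {u \<in> C. real (card ((Nplus V E u - C) \<union> (C - Nplus V E u))) > beta / 2 * real (card C)}"

definition marked :: "'a set \<Rightarrow> ('a \<Rightarrow> 'a \<Rightarrow> bool) \<Rightarrow> 'a set \<Rightarrow> 'a set" where
  "marked V E C =
     (if card C \<le> 1 then {}
      else if real (card (marked0 V E C)) \<ge> beta * real (card C) / 3 then C
      else marked0 V E C)"

definition atoms :: "'a set \<Rightarrow> ('a \<Rightarrow> 'a \<Rightarrow> bool) \<Rightarrow> 'a set set \<Rightarrow> 'a set set" where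
  "atoms V E \<C> =
     {C - marked V E C | C. C \<in> \<C> \<and> C - marked V E C \<noteq> {}}
     \<union> {{u} | u. \<exists>C\<in>\<C>. u \<in> marked V E C}"

end

theory Submission
  imports Defs
begin

definition dis :: "('a \<Rightarrow> 'a \<Rightarrow> bool) \<Rightarrow> 'a set set \<Rightarrow> 'a \<Rightarrow> 'a \<Rightarrow> bool" where
  "dis E K u v \<longleftrightarrow> (E u v \<and> \<not> same_cluster K u v) \<or> (\<not> E u v \<and> same_cluster K u v)"

definition DS :: "'a set \<Rightarrow> ('a \<Rightarrow> 'a \<Rightarrow> bool) \<Rightarrow> 'a set set \<Rightarrow> 'a set set" where
  "DS V E K = {{u, v} | u v. u \<in> V \<and> v \<in> V \<and> u \<noteq> v \<and> dis E K u v}"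

lemma obj_DS: "obj V E K = card (DS V E K)"
  unfolding obj_def DS_def dis_def by simp

lemma DS_finite: "finite V \<Longrightarrow> finite (DS V E K)"
proof -
  assume "finite V"
  have "DS V E K \<subseteq> Pow V" unfolding DS_def by auto
  thus ?thesis using \<open>finite V\<close> by (meson finite_Pow_iff finite_subset)
qed

lemma double_count:
  fixes V :: "nat set"
  assumes "cc_instance V E"
  shows "card (SIGMA u:V. {v\<in>V. v\<noteq>u \<and> dis E K u v}) \<le> 2 * obj V E K"
proof -
  have fin: "finite V" using assms unfolding cc_instance_def by simp
  have sym: "dis E K u v \<Longrightarrow> dis E K v u" for u v
    using assms unfolding cc_instance_def dis_def same_cluster_def by blast
  let ?P = "SIGMA u:V. {v\<in>V. v\<noteq>u \<and> dis E K u v}"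
  let ?f = "\<lambda>(u::nat,v). ({u,v}, u < v)"
  have inj: "inj_on ?f ?P"
  proof (rule inj_onI)
    fix x y assume "x \<in> ?P" "y \<in> ?P" "?f x = ?f y"
    then obtain a b c d where x: "x = (a,b)" and y: "y = (c,d)" and ab: "a \<noteq> b" and cd: "c \<noteq> d"
      and e: "{a,b} = {c,d}" and l: "(a<b) = (c<d)" by auto
    from e have "(a = c \<and> b = d) \<or> (a = d \<and> b = c)" by (metis doubleton_eq_iff)
    thus "x = y" using x y l ab cd by auto
  qed
  have img: "?f ` ?P \<subseteq> DS V E K \<times> UNIV"
    unfolding DS_def by auto
  have "card ?P = card (?f ` ?P)" using inj by (simp add: card_image)
  also have "\<dots> \<le> card (DS V E K \<times> (UNIV::bool set))"
    by (rule card_mono) (use finite_cartesian_product[OF DS_finite[OF fin], of "UNIV::bool set"] img in auto)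
  also have "\<dots> = 2 * card (DS V E K)" by (simp add: card_cartesian_product)
  finally show ?thesis by (simp add: obj_DS)
qed

lemma clus_same:
  assumes "is_clustering V K" "C \<in> K" "u \<in> C"
  shows "same_cluster K u v \<longleftrightarrow> v \<in> C"
  using assms unfolding is_clustering_def same_cluster_def by blast

lemma delta_eq:
  assumes "is_clustering V K" "C \<in> K" "u \<in> C"
  shows "(Nplus V E u - C) \<union> (C - Nplus V E u) = {v\<in>V. v\<noteq>u \<and> dis E K u v}"
proof -
  have CV: "C \<subseteq> V" using assms unfolding is_clustering_def by blast
  show ?thesis
    using CV assms(3) clus_same[OF assms] unfolding Nplus_def dis_def by auto
qed

lemma marked0_sub: "marked0 V E C \<subseteq> C" unfolding marked0_def by auto
lemma marked_sub: "marked V E C \<subseteq> C"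
  unfolding marked_def using marked0_sub[of V E C] by auto

lemma per_cluster:
  assumes fin: "finite C"
  shows "real (card (marked V E C) * card C) \<le>
           600 * (\<Sum>u\<in>C. real (card ((Nplus V E u - C) \<union> (C - Nplus V E u))))"
proof -
  define d where "d u = real (card ((Nplus V E u - C) \<union> (C - Nplus V E u)))" for u
  define m where "m = marked0 V E C"
  define n where "n = real (card C)"
  have fm: "finite m" using fin marked0_sub m_def by (metis finite_subset)
  have dpos: "d u \<ge> 0" for u unfolding d_def by simp
  have big: "u \<in> m \<Longrightarrow> d u > n / 20" for u
    unfolding m_def marked0_def d_def n_def beta_def by auto
  have S1: "(\<Sum>u\<in>m. d u) \<ge> real (card m) * n / 20"
  proof -
    have "(\<Sum>u\<in>m. d u) \<ge> (\<Sum>u\<in>m. n / 20)"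
      by (rule sum_mono) (use big in force)
    thus ?thesis by simp
  qed
  have S2: "(\<Sum>u\<in>m. d u) \<le> (\<Sum>u\<in>C. d u)"
    by (rule sum_mono2) (use fin m_def marked0_sub[of V E C] dpos in auto)
  have n0: "n \<ge> 0" unfolding n_def by simp
  consider (a) "card C \<le> 1" | (b) "\<not> card C \<le> 1" "real (card m) \<ge> beta * n / 3"
    | (c) "\<not> card C \<le> 1" "\<not> real (card m) \<ge> beta * n / 3" by blast
  then show ?thesis
  proof cases
    case a
    then show ?thesis unfolding marked_def using dpos d_def
      by (simp add: sum_nonneg)
  next
    case b
    then have mk: "marked V E C = C" unfolding marked_def m_def n_def by simp
    have "real (card m) \<ge> n / 30" using b unfolding beta_def by simp
    hence "n * n \<le> 30 * (real (card m) * n)" using n0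
      by (metis mult.commute mult_right_mono divide_le_eq zero_less_numeral mult.assoc order_refl
          linordered_field_class.pos_divide_le_eq)
    also have "\<dots> \<le> 600 * (\<Sum>u\<in>m. d u)" using S1 by linarith
    also have "\<dots> \<le> 600 * (\<Sum>u\<in>C. d u)" using S2 by simp
    finally show ?thesis using mk unfolding n_def d_def by simp
  next
    case c
    then have mk: "marked V E C = m" unfolding marked_def m_def n_def by simp
    have "real (card m) * n \<le> 20 * (\<Sum>u\<in>m. d u)" using S1 by linarith
    also have "\<dots> \<le> 600 * (\<Sum>u\<in>C. d u)"
    proof -
      have "0 \<le> (\<Sum>u\<in>C. d u)" by (rule sum_nonneg) (simp add: dpos)
      thus ?thesis using S2 by linarith
    qed
    finally show ?thesis using mk unfolding n_def d_def by simp
  qed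
qed

theorem lemma6:
  "\<exists>c::real. c > 0 \<and>
     (\<forall>(V::nat set) E \<C>. cc_instance V E \<longrightarrow> is_clustering V \<C> \<longrightarrow>
        obj V E \<C> \<le> 3 * opt V E \<longrightarrow>
        real (obj V E (atoms V E \<C>)) \<le> c * real (opt V E))"
proof (rule exI[of _ 3603], intro conjI allI impI)
  show "(0::real) < 3603" by simp
  fix V :: "nat set" and E K
  assume inst: "cc_instance V E" and clus: "is_clustering V K" and le: "obj V E K \<le> 3 * opt V E"
  have fin: "finite V" using inst unfolding cc_instance_def by simp
  have KV: "\<And>C. C \<in> K \<Longrightarrow> C \<subseteq> V" using clus unfolding is_clustering_def by blast
  have finK: "finite K" using KV fin by (meson Pow_iff finite_Pow_iff finite_subset subsetI)
  have finC: "\<And>C. C \<in> K \<Longrightarrow> finite C" using KV fin finite_subset by blast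
  have disj: "\<forall>A\<in>K. \<forall>B\<in>K. A \<noteq> B \<longrightarrow> A \<inter> B = {}" using clus unfolding is_clustering_def by blast
  have UK: "\<Union>K = V" using clus unfolding is_clustering_def by blast
  define Q where "Q = (\<Union>C\<in>K. marked V E C \<times> C)"
  define g where "g u = card {v\<in>V. v\<noteq>u \<and> dis E K u v}" for u
  have finQ: "finite Q" unfolding Q_def
  proof (rule finite_UN_I[OF finK])
    fix C assume C: "C \<in> K"
    show "finite (marked V E C \<times> C)"
      using finC[OF C] finite_subset[OF marked_sub[of V E C] finC[OF C]] by simp
  qed
  have sub: "DS V E (atoms V E K) \<subseteq> DS V E K \<union> (\<lambda>(u,v). {u,v}) ` Q"
  proof
    fix p assume "p \<in> DS V E (atoms V E K)"
    then obtain u v where p: "p = {u,v}" and uv: "u \<in> V" "v \<in> V" "u \<noteq> v"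
      and d: "dis E (atoms V E K) u v" unfolding DS_def by blast
    have s1: "same_cluster K u v" if "same_cluster (atoms V E K) u v"
      using that uv(3) marked_sub unfolding same_cluster_def atoms_def by blast
    show "p \<in> DS V E K \<union> (\<lambda>(u,v). {u,v}) ` Q"
    proof (cases "dis E K u v")
      case True then show ?thesis unfolding DS_def p using uv by blast
    next
      case False
      with d s1 have e: "E u v" and ns: "\<not> same_cluster (atoms V E K) u v" and sc: "same_cluster K u v"
        unfolding dis_def by blast+
      then obtain C where C: "C \<in> K" "u \<in> C" "v \<in> C" unfolding same_cluster_def by blast
      show ?thesis
      proof (cases "u \<in> marked V E C \<or> v \<in> marked V E C")
        case True
        then have "(u,v) \<in> Q \<or> (v,u) \<in> Q" unfolding Q_def using C by blast
        then have "p \<in> (\<lambda>(u,v). {u,v}) ` Q" unfolding p by (auto simp: insert_commute)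
        then show ?thesis by blast
      next
        case False
        then have "C - marked V E C \<in> atoms V E K" unfolding atoms_def using C by blast
        then have "same_cluster (atoms V E K) u v" unfolding same_cluster_def using C False by blast
        with ns show ?thesis by blast
      qed
    qed
  qed
  have "obj V E (atoms V E K) \<le> card (DS V E K \<union> (\<lambda>(u,v). {u,v}) ` Q)"
    unfolding obj_DS by (rule card_mono) (use sub DS_finite[OF fin] finQ in auto)
  also have "\<dots> \<le> card (DS V E K) + card ((\<lambda>(u,v). {u,v}) ` Q)" by (rule card_Un_le)
  also have "\<dots> \<le> obj V E K + card Q" using card_image_le[OF finQ] obj_DS by (metis add_le_mono1 add_left_mono)
  finally have A: "obj V E (atoms V E K) \<le> obj V E K + card Q" .
  have "card Q \<le> (\<Sum>C\<in>K. card (marked V E C \<times> C))" unfolding Q_def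
    by (rule card_UN_le[OF finK])
  also have "\<dots> = (\<Sum>C\<in>K. card (marked V E C) * card C)"
    by (rule sum.cong) (auto simp: card_cartesian_product)
  finally have B: "real (card Q) \<le> (\<Sum>C\<in>K. real (card (marked V E C) * card C))"
    by (metis of_nat_le_iff of_nat_sum)
  also have "\<dots> \<le> (\<Sum>C\<in>K. 600 * (\<Sum>u\<in>C. real (g u)))"
  proof (rule sum_mono)
    fix C assume C: "C \<in> K"
    have "(\<Sum>u\<in>C. real (card ((Nplus V E u - C) \<union> (C - Nplus V E u)))) = (\<Sum>u\<in>C. real (g u))"
      by (rule sum.cong) (use delta_eq[OF clus C] g_def in auto)
    then show "real (card (marked V E C) * card C) \<le> 600 * (\<Sum>u\<in>C. real (g u))"
      using per_cluster[OF finC[OF C], of V E] by simp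
  qed
  also have "\<dots> = 600 * (\<Sum>u\<in>V. real (g u))"
    using sum.Union_disjoint[OF _ disj, of "\<lambda>u. real (g u)"] finC UK
    by (simp add: sum_distrib_left)
  also have "(\<Sum>u\<in>V. real (g u)) = real (card (SIGMA u:V. {v\<in>V. v\<noteq>u \<and> dis E K u v}))"
    unfolding g_def using fin by (simp add: card_SigmaI)
  also have "\<dots> \<le> real (2 * obj V E K)" using double_count[OF inst, of K] by linarith
  finally have "real (card Q) \<le> 1200 * real (obj V E K)" by simp
  with A have "real (obj V E (atoms V E K)) \<le> 1201 * real (obj V E K)"
    by (smt (verit) of_nat_add of_nat_mono)
  also have "\<dots> \<le> 1201 * (3 * real (opt V E))" using le by (simp add: of_nat_le_iff[symmetric])
  finally show "real (obj V E (atoms V E K)) \<le> 3603 * real (opt V E)" by simp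
qed

end
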